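(* Let $C$ be a linear $[n,k,d]_q$ code with covering radius $\rho=1$. If $\mathrm{Aut}(C)$ is transitive, then $C$ is completely transitive.
   Context: Covering radius $\rho=\max_{{\bf v}\in\mathbb{F}_q^n}\min_{{\bf x}\in C}d({\bf v},{\bf x})$ (Hamming distance). A linear automorphism of $\mathbb{F}_q^n$ is ${\bf x}\mapsto{\bf x}M$ for an $n\times n$ monomial matrix $M$. $\mathrm{Aut}(C)$ is the group of linear automorphisms leaving $C$ invariant; it is transitive if it acts transitively on the weight-one vectors of $\mathbb{F}_q^n$. $\mathrm{Aut}(C)$ acts on cosets of $C$ by $\phi({\bf v}+C)=\phi({\bf v})+C$, and $C$ is completely transitive if this action has exactly $\rho+1$ orbits. *)

theory Defs
  imports Main
begin

text \<open>Vectors of F_q^n are functions 'n => 'a with 'n a finite index type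
  (n = CARD('n)) and 'a a finite field (q = CARD('a)).
  Matrices are functions 'n => 'n => 'a.\<close>

definition hamming_dist :: "('n::finite \<Rightarrow> 'a) \<Rightarrow> ('n \<Rightarrow> 'a) \<Rightarrow> nat" where
  "hamming_dist v x = card {i. v i \<noteq> x i}"

definition weight :: "('n::finite \<Rightarrow> 'a::zero) \<Rightarrow> nat" where
  "weight v = card {i. v i \<noteq> 0}"

definition linear_code :: "('n::finite \<Rightarrow> 'a::field) set \<Rightarrow> bool" where
  "linear_code C \<longleftrightarrow> (\<lambda>i. 0) \<in> C \<and> (\<forall>x\<in>C. \<forall>y\<in>C. (\<lambda>i. x i + y i) \<in> C)
     \<and> (\<forall>c. \<forall>x\<in>C. (\<lambda>i. c * x i) \<in> C)"

definition covering_radius :: "('n::finite \<Rightarrow> 'a::finite) set \<Rightarrow> nat" where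
  "covering_radius C = Max ((\<lambda>v. Min ((\<lambda>x. hamming_dist v x) ` C)) ` UNIV)"

definition vecmat :: "('n::finite \<Rightarrow> 'a::comm_ring_1) \<Rightarrow> ('n \<Rightarrow> 'n \<Rightarrow> 'a) \<Rightarrow> ('n \<Rightarrow> 'a)" where
  "vecmat x M = (\<lambda>j. \<Sum>i\<in>UNIV. x i * M i j)"

definition monomial_matrix :: "('n::finite \<Rightarrow> 'n \<Rightarrow> 'a::zero) \<Rightarrow> bool" where
  "monomial_matrix M \<longleftrightarrow> (\<forall>i. \<exists>!j. M i j \<noteq> 0) \<and> (\<forall>j. \<exists>!i. M i j \<noteq> 0)"

definition Aut :: "('n::finite \<Rightarrow> 'a::field) set \<Rightarrow> ('n \<Rightarrow> 'n \<Rightarrow> 'a) set" where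
  "Aut C = {M. monomial_matrix M \<and> (\<lambda>x. vecmat x M) ` C = C}"

definition aut_transitive :: "('n::finite \<Rightarrow> 'a::field) set \<Rightarrow> bool" where
  "aut_transitive C \<longleftrightarrow> (\<forall>u v. weight u = 1 \<longrightarrow> weight v = 1 \<longrightarrow>
       (\<exists>M\<in>Aut C. vecmat u M = v))"

definition coset :: "('n::finite \<Rightarrow> 'a::field) set \<Rightarrow> ('n \<Rightarrow> 'a) \<Rightarrow> ('n \<Rightarrow> 'a) set" where
  "coset C v = {(\<lambda>i. v i + c i) | c. c \<in> C}"

definition coset_orbit :: "('n::finite \<Rightarrow> 'a::field) set \<Rightarrow> ('n \<Rightarrow> 'a) \<Rightarrow> ('n \<Rightarrow> 'a) set set" where
  "coset_orbit C v = {coset C (vecmat v M) | M. M \<in> Aut C}"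

definition coset_orbits :: "('n::finite \<Rightarrow> 'a::field) set \<Rightarrow> ('n \<Rightarrow> 'a) set set set" where
  "coset_orbits C = {coset_orbit C v | v. True}"

definition completely_transitive :: "('n::finite \<Rightarrow> 'a::{field,finite}) set \<Rightarrow> bool" where
  "completely_transitive C \<longleftrightarrow> card (coset_orbits C) = covering_radius C + 1"

end

theory Submission
  imports Defs
begin

lemma coset_eq:
  fixes C :: "('n::finite \<Rightarrow> 'a::field) set"
  assumes L: "linear_code C" and d: "(\<lambda>i. u i - u' i) \<in> C"
  shows "coset C u = coset C u'"
proof -
  have add: "\<And>x y. x \<in> C \<Longrightarrow> y \<in> C \<Longrightarrow> (\<lambda>i. x i + y i) \<in> C"
    and sc: "\<And>c x. x \<in> C \<Longrightarrow> (\<lambda>i. c * x i) \<in> C" using L unfolding linear_code_def by auto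
  have neg: "(\<lambda>i. u' i - u i) \<in> C"
    using sc[OF d, of "-1"] by simp
  show ?thesis
  proof (intro set_eqI iffI)
    fix z assume "z \<in> coset C u"
    then obtain c where c: "c \<in> C" "z = (\<lambda>i. u i + c i)" unfolding coset_def by auto
    have "(\<lambda>i. (u i - u' i) + c i) \<in> C" using add[OF d c(1)] by simp
    moreover have "z = (\<lambda>i. u' i + ((u i - u' i) + c i))" using c by auto
    ultimately show "z \<in> coset C u'" unfolding coset_def
      by (intro CollectI exI[where x="\<lambda>i. (u i - u' i) + c i"]) simp
  next
    fix z assume "z \<in> coset C u'"
    then obtain c where c: "c \<in> C" "z = (\<lambda>i. u' i + c i)" unfolding coset_def by auto
    have "(\<lambda>i. (u' i - u i) + c i) \<in> C" using add[OF neg c(1)] by simp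
    moreover have "z = (\<lambda>i. u i + ((u' i - u i) + c i))" using c by auto
    ultimately show "z \<in> coset C u" unfolding coset_def
      by (intro CollectI exI[where x="\<lambda>i. (u' i - u i) + c i"]) simp
  qed
qed

lemma coset_self:
  fixes C :: "('n::finite \<Rightarrow> 'a::field) set"
  assumes L: "linear_code C" and v: "v \<in> C"
  shows "coset C v = C"
proof -
  have z: "(\<lambda>i. 0) \<in> C" using L unfolding linear_code_def by auto
  have "coset C v = coset C (\<lambda>i. 0)" using coset_eq[OF L] v by simp
  also have "\<dots> = C" unfolding coset_def by auto
  finally show ?thesis .
qed

lemma vecmat_add: "vecmat (\<lambda>i. x i + y i) M = (\<lambda>j. vecmat x M j + vecmat y M j)"
  unfolding vecmat_def by (simp add: distrib_right sum.distrib)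

lemma weight_one_vecmat:
  fixes e :: "'n::finite \<Rightarrow> 'a::field"
  assumes w: "weight e = 1" and M: "monomial_matrix M"
  shows "weight (vecmat e M) = 1"
proof -
  obtain i0 where i0: "{i. e i \<noteq> 0} = {i0}" using w unfolding weight_def
    by (metis card_1_singletonE)
  have ez: "\<And>i. i \<noteq> i0 \<Longrightarrow> e i = 0" and e0: "e i0 \<noteq> 0" using i0 by auto
  have vm: "vecmat e M j = e i0 * M i0 j" for j
    unfolding vecmat_def by (subst sum.remove[of _ i0]) (auto simp: ez)
  obtain j0 where j0: "M i0 j0 \<noteq> 0" "\<And>j. M i0 j \<noteq> 0 \<Longrightarrow> j = j0"
  proof -
    note ex = M[unfolded monomial_matrix_def, THEN conjunct1, THEN spec[of _ i0]]
    show ?thesis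
      apply (rule ex1E[OF ex])
      apply (rule that)
       apply assumption
      apply (erule allE, erule mp, assumption)
      done
  qed
  have iff: "vecmat e M j \<noteq> 0 \<longleftrightarrow> M i0 j \<noteq> 0" for j using e0 by (simp add: vm)
  have "{j. vecmat e M j \<noteq> 0} = {j0}"
  proof (intro set_eqI iffI)
    fix j assume "j \<in> {j. vecmat e M j \<noteq> 0}"
    hence "M i0 j \<noteq> 0" using iff by simp
    thus "j \<in> {j0}" using j0(2) by simp
  next
    fix j assume "j \<in> {j0}"
    thus "j \<in> {j. vecmat e M j \<noteq> 0}" using iff j0(1) by simp
  qed
  thus ?thesis unfolding weight_def by simp
qed

theorem lemma1p5:
  fixes C :: "('n::finite \<Rightarrow> 'a::{field,finite}) set"
  assumes "linear_code C"
    and "covering_radius C = 1"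
    and "aut_transitive C"
  shows "completely_transitive C"
proof -
  note L = assms(1)
  have z: "(\<lambda>i. 0) \<in> C" using L unfolding linear_code_def by auto
  have add: "\<And>x y. x \<in> C \<Longrightarrow> y \<in> C \<Longrightarrow> (\<lambda>i. x i + y i) \<in> C"
    and sc: "\<And>c x. x \<in> C \<Longrightarrow> (\<lambda>i. c * x i) \<in> C" using L unfolding linear_code_def by auto
  have sub: "\<And>x y. x \<in> C \<Longrightarrow> y \<in> C \<Longrightarrow> (\<lambda>i. x i - y i) \<in> C"
  proof -
    fix x y assume "x \<in> C" "y \<in> C"
    from add[OF this(1) sc[OF this(2), of "-1"]] show "(\<lambda>i. x i - y i) \<in> C" by simp
  qed
  define f where "f v = Min ((\<lambda>x. hamming_dist v x) ` C)" for v :: "'n \<Rightarrow> 'a"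
  have fin: "finite C" by simp
  have Cne: "C \<noteq> {}" using z by auto
  have cr: "Max (f ` UNIV) = 1" using assms(2) unfolding covering_radius_def f_def by simp
  have fle: "f v \<le> 1" for v using cr by (metis Max_ge UNIV_I finite finite_imageI image_eqI)
  obtain v0 where fv0: "f v0 = 1" using cr
    by (metis Max_in UNIV_not_empty empty_is_image finite finite_imageI imageE)
  have fmem: "\<And>v. v \<in> C \<Longrightarrow> f v = 0"
  proof -
    fix v assume "v \<in> C"
    hence "hamming_dist v v \<in> (\<lambda>x. hamming_dist v x) ` C" by auto
    moreover have "hamming_dist v v = 0" unfolding hamming_dist_def by simp
    ultimately show "f v = 0" unfolding f_def by (metis Min_le finite_imageI fin le_zero_eq)
  qed
  have v0C: "v0 \<notin> C" using fv0 fmem by fastforce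
  have dec: "\<exists>c e. c \<in> C \<and> weight e = 1 \<and> v = (\<lambda>i. c i + e i)" if "v \<notin> C" for v
  proof -
    have "f v \<in> (\<lambda>x. hamming_dist v x) ` C" unfolding f_def using Cne fin by (intro Min_in) auto
    then obtain c where c: "c \<in> C" "f v = hamming_dist v c" by auto
    have "v \<noteq> c" using that c by auto
    hence "{i. v i \<noteq> c i} \<noteq> {}" by auto
    hence "hamming_dist v c \<noteq> 0" unfolding hamming_dist_def by simp
    hence hd: "hamming_dist v c = 1" using fle[of v] c by simp
    define e where "e = (\<lambda>i. v i - c i)"
    have "{i. e i \<noteq> 0} = {i. v i \<noteq> c i}" unfolding e_def by auto
    hence "weight e = 1" using hd unfolding weight_def hamming_dist_def by simp
    moreover have "v = (\<lambda>i. c i + e i)" unfolding e_def by auto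
    ultimately show ?thesis using c by blast
  qed
  obtain c0 e0 where ce0: "c0 \<in> C" "weight e0 = 1" "v0 = (\<lambda>i. c0 i + e0 i)" using dec[OF v0C] by metis
  have e0C: "e0 \<notin> C"
  proof
    assume "e0 \<in> C" then have "v0 \<in> C" using add[OF ce0(1)] ce0(3) by simp
    thus False using v0C by simp
  qed
  have autC: "\<And>M v. M \<in> Aut C \<Longrightarrow> v \<in> C \<Longrightarrow> vecmat v M \<in> C"
    unfolding Aut_def by blast
  have autM: "\<And>M. M \<in> Aut C \<Longrightarrow> monomial_matrix M" unfolding Aut_def by blast
  have trans: "\<And>u w. weight u = 1 \<Longrightarrow> weight w = 1 \<Longrightarrow> \<exists>M\<in>Aut C. vecmat u M = w"
    using assms(3) unfolding aut_transitive_def by blast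
  obtain M0 where M0: "M0 \<in> Aut C" using trans[OF ce0(2) ce0(2)] by blast
  define O1 where "O1 = {coset C w | w. weight w = 1}"
  have orbA: "coset_orbit C v = {C}" if "v \<in> C" for v
    unfolding coset_orbit_def using coset_self[OF L] autC that M0 by blast
  have orbB: "coset_orbit C v = O1" if vC: "v \<notin> C" for v
  proof -
    obtain c e where ce: "c \<in> C" "weight e = 1" "v = (\<lambda>i. c i + e i)" using dec[OF vC] by blast
    have key: "coset C (vecmat v M) = coset C (vecmat e M)" if "M \<in> Aut C" for M
    proof -
      have "(\<lambda>i. vecmat v M i - vecmat e M i) = vecmat c M" using ce(3) by (simp add: vecmat_add)
      thus ?thesis using coset_eq[OF L] autC[OF that ce(1)] by simp
    qed
    show ?thesis
    proof (intro set_eqI iffI)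
      fix X assume "X \<in> coset_orbit C v"
      then obtain M where "M \<in> Aut C" "X = coset C (vecmat v M)" unfolding coset_orbit_def by blast
      thus "X \<in> O1" unfolding O1_def using key weight_one_vecmat[OF ce(2) autM] by blast
    next
      fix X assume "X \<in> O1"
      then obtain w where w: "weight w = 1" "X = coset C w" unfolding O1_def by blast
      then obtain M where "M \<in> Aut C" "vecmat e M = w" using trans[OF ce(2)] by blast
      thus "X \<in> coset_orbit C v" unfolding coset_orbit_def using key w by blast
    qed
  qed
  have "coset_orbits C = {{C}, O1}"
    unfolding coset_orbits_def using orbA orbB z v0C by blast
  moreover have "{C} \<noteq> O1"
  proof
    assume "{C} = O1"
    hence "coset C e0 = C" unfolding O1_def using ce0(2) by blast
    moreover have "e0 \<in> coset C e0" unfolding coset_def using z by force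
    ultimately show False using e0C by simp
  qed
  ultimately have "card (coset_orbits C) = 2" by simp
  thus ?thesis unfolding completely_transitive_def using assms(2) by simp
qed

end
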